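(* The following $\Re$-modules are pairwise non-isomorphic: $R_{\frac{n-1}{2}}(-\frac14,-\frac14,-\frac14)$ for all odd $n\ge1$; $R_{\frac{n-2}{4}}(\frac{n-2}{8},\frac{n-2}{8},\frac{n-6}{8})$, $R_{\frac{n-2}{4}}(\frac{n-2}{8},\frac{n-6}{8},\frac{n-2}{8})$, $R_{\frac{n-2}{4}}(\frac{n-6}{8},\frac{n-2}{8},\frac{n-2}{8})$ for all $n\ge2$ with $n\equiv2\pmod4$; $R_{\frac{n-6}{4}}(\frac{n-2}{8},\frac{n-2}{8},\frac{n-2}{8})$ for all $n\ge6$ with $n\equiv2\pmod4$; $R_{\frac n4-1}(\frac{n-4}{8},\frac{n-4}{8},\frac n8)$, $R_{\frac n4-1}(\frac{n-4}{8},\frac n8,\frac{n-4}{8})$, $R_{\frac n4-1}(\frac n8,\frac{n-4}{8},\frac{n-4}{8})$ for all $n\ge4$ with $n\equiv0\pmod4$; $R_{\frac n4}(\frac{n-4}{8},\frac{n-4}{8},\frac{n-4}{8})$ for all $n\ge0$ with $n\equiv0\pmod4$.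
   Context: $\Re$ is the unital associative $\mathbb C$-algebra generated by $A,B,C,\Delta$ with $[A,B]=[B,C]=[C,A]=2\Delta$ and such that $\alpha=[A,\Delta]+AC-BA$, $\beta=[B,\Delta]+BA-CB$, $\gamma=[C,\Delta]+CB-AC$ are central; $\delta=A+B+C$. For $a,b,c\in\mathbb C$, $d\in\mathbb N$, $R_d(a,b,c)$ is the $(d+1)$-dimensional $\Re$-module (determined up to isomorphism) with a basis in which $A$ is lower bidiagonal with diagonal $\theta_i=(a+\frac d2-i)(a+\frac d2-i+1)$ ($0\le i\le d$) and subdiagonal entries $1$, $B$ is upper bidiagonal with diagonal $\theta^*_i=(b+\frac d2-i)(b+\frac d2-i+1)$ and superdiagonal $\varphi_i=i(i-d-1)(a+b+c+\frac d2-i+2)(a+b-c+\frac d2-i+1)$ ($1\le i\le d$), and $\alpha,\beta,\gamma,\delta$ act as the scalars $(c-b)(c+b+1)(a-\frac d2)(a+\frac d2+1)$, $(a-c)(a+c+1)(b-\frac d2)(b+\frac d2+1)$, $(b-a)(b+a+1)(c-\frac d2)(c+\frac d2+1)$, $\frac d2(\frac d2+1)+a(a+1)+b(b+1)+c(c+1)$. *)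

theory Defs
  imports "Jordan_Normal_Form.Matrix"
begin

text \<open>The module R_d(a,b,c) of the algebra generated by A,B,C,Delta, given by the
matrices of the generators with respect to the distinguished basis v_0,...,v_d.
A is lower bidiagonal, B upper bidiagonal; C and Delta are then forced by the
relations: delta = A+B+C acts as a scalar, and [A,B] = 2 Delta.\<close>

definition R_theta :: "nat \<Rightarrow> complex \<Rightarrow> nat \<Rightarrow> complex" where
  "R_theta d a i = (a + of_nat d / 2 - of_nat i) * (a + of_nat d / 2 - of_nat i + 1)"

definition R_phi :: "nat \<Rightarrow> complex \<Rightarrow> complex \<Rightarrow> complex \<Rightarrow> nat \<Rightarrow> complex" where
  "R_phi d a b c i = of_nat i * (of_nat i - of_nat d - 1)
      * (a + b + c + of_nat d / 2 - of_nat i + 2) * (a + b - c + of_nat d / 2 - of_nat i + 1)"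

definition R_delta :: "nat \<Rightarrow> complex \<Rightarrow> complex \<Rightarrow> complex \<Rightarrow> complex" where
  "R_delta d a b c = (of_nat d / 2) * (of_nat d / 2 + 1) + a * (a + 1) + b * (b + 1) + c * (c + 1)"

definition R_A :: "nat \<Rightarrow> complex \<Rightarrow> complex mat" where
  "R_A d a = mat (d + 1) (d + 1)
     (\<lambda>(i, j). if i = j then R_theta d a i else if i = j + 1 then 1 else 0)"

definition R_B :: "nat \<Rightarrow> complex \<Rightarrow> complex \<Rightarrow> complex \<Rightarrow> complex mat" where
  "R_B d a b c = mat (d + 1) (d + 1)
     (\<lambda>(i, j). if i = j then R_theta d b i else if j = i + 1 then R_phi d a b c j else 0)"

definition R_C :: "nat \<Rightarrow> complex \<Rightarrow> complex \<Rightarrow> complex \<Rightarrow> complex mat" where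
  "R_C d a b c = R_delta d a b c \<cdot>\<^sub>m 1\<^sub>m (d + 1) - R_A d a - R_B d a b c"

definition R_Delta :: "nat \<Rightarrow> complex \<Rightarrow> complex \<Rightarrow> complex \<Rightarrow> complex mat" where
  "R_Delta d a b c = (1 / 2 :: complex) \<cdot>\<^sub>m (R_A d a * R_B d a b c - R_B d a b c * R_A d a)"

definition R_iso :: "nat \<Rightarrow> complex \<Rightarrow> complex \<Rightarrow> complex \<Rightarrow>
                     nat \<Rightarrow> complex \<Rightarrow> complex \<Rightarrow> complex \<Rightarrow> bool" where
  "R_iso d a b c d' a' b' c' \<longleftrightarrow> d = d' \<and>
     (\<exists>P \<in> carrier_mat (d + 1) (d + 1). invertible_mat P
        \<and> P * R_A d a = R_A d' a' * P
        \<and> P * R_B d a b c = R_B d' a' b' c' * P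
        \<and> P * R_C d a b c = R_C d' a' b' c' * P
        \<and> P * R_Delta d a b c = R_Delta d' a' b' c' * P)"

datatype Rlabel =
    L1 nat | L2a nat | L2b nat | L2c nat | L3 nat | L4a nat | L4b nat | L4c nat | L5 nat

fun Rlabel_valid :: "Rlabel \<Rightarrow> bool" where
  "Rlabel_valid (L1 n) = (odd n \<and> n \<ge> 1)"
| "Rlabel_valid (L2a n) = (n \<ge> 2 \<and> n mod 4 = 2)"
| "Rlabel_valid (L2b n) = (n \<ge> 2 \<and> n mod 4 = 2)"
| "Rlabel_valid (L2c n) = (n \<ge> 2 \<and> n mod 4 = 2)"
| "Rlabel_valid (L3 n) = (n \<ge> 6 \<and> n mod 4 = 2)"
| "Rlabel_valid (L4a n) = (n \<ge> 4 \<and> n mod 4 = 0)"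
| "Rlabel_valid (L4b n) = (n \<ge> 4 \<and> n mod 4 = 0)"
| "Rlabel_valid (L4c n) = (n \<ge> 4 \<and> n mod 4 = 0)"
| "Rlabel_valid (L5 n) = (n mod 4 = 0)"

fun Rlabel_params :: "Rlabel \<Rightarrow> nat \<times> complex \<times> complex \<times> complex" where
  "Rlabel_params (L1 n) = ((n - 1) div 2, -1/4, -1/4, -1/4)"
| "Rlabel_params (L2a n) = ((n - 2) div 4, (of_nat n - 2)/8, (of_nat n - 2)/8, (of_nat n - 6)/8)"
| "Rlabel_params (L2b n) = ((n - 2) div 4, (of_nat n - 2)/8, (of_nat n - 6)/8, (of_nat n - 2)/8)"
| "Rlabel_params (L2c n) = ((n - 2) div 4, (of_nat n - 6)/8, (of_nat n - 2)/8, (of_nat n - 2)/8)"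
| "Rlabel_params (L3 n) = ((n - 6) div 4, (of_nat n - 2)/8, (of_nat n - 2)/8, (of_nat n - 2)/8)"
| "Rlabel_params (L4a n) = (n div 4 - 1, (of_nat n - 4)/8, (of_nat n - 4)/8, of_nat n / 8)"
| "Rlabel_params (L4b n) = (n div 4 - 1, (of_nat n - 4)/8, of_nat n / 8, (of_nat n - 4)/8)"
| "Rlabel_params (L4c n) = (n div 4 - 1, of_nat n / 8, (of_nat n - 4)/8, (of_nat n - 4)/8)"
| "Rlabel_params (L5 n) = (n div 4, (of_nat n - 4)/8, (of_nat n - 4)/8, (of_nat n - 4)/8)"

definition Rlabel_iso :: "Rlabel \<Rightarrow> Rlabel \<Rightarrow> bool" where
  "Rlabel_iso x y = (case Rlabel_params x of (d, a, b, c) \<Rightarrow>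
                      case Rlabel_params y of (d', a', b', c') \<Rightarrow> R_iso d a b c d' a' b' c')"

end

theory Submission imports Defs begin
definition tr :: "complex mat \<Rightarrow> complex" where "tr M = (\<Sum>i<dim_row M. M $$ (i,i))"

lemma tr_comm: assumes "A \<in> carrier_mat n n" "B \<in> carrier_mat n n"
  shows "tr (A * B) = tr (B * A)"
proof -
  have "tr (A*B) = (\<Sum>i<n. \<Sum>k<n. A $$ (i,k) * B $$ (k,i))"
    using assms unfolding tr_def
    by (auto simp: scalar_prod_def intro!: sum.cong simp flip: atLeast0LessThan)
  also have "\<dots> = (\<Sum>k<n. \<Sum>i<n. B $$ (k,i) * A $$ (i,k))"
    by (subst sum.swap) (simp add: mult.commute)
  also have "\<dots> = tr (B*A)"
    using assms unfolding tr_def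
    by (auto simp: scalar_prod_def intro!: sum.cong simp flip: atLeast0LessThan)
  finally show ?thesis .
qed

lemma tr_sim: assumes "P \<in> carrier_mat n n" "invertible_mat P" "A \<in> carrier_mat n n"
  "A' \<in> carrier_mat n n" "P * A = A' * P" shows "tr A = tr A'"
proof -
  obtain Q where Q0: "P * Q = 1\<^sub>m (dim_row P)" "Q * P = 1\<^sub>m (dim_row Q)"
    using assms(1,2) unfolding invertible_mat_def inverts_mat_def by auto
  have "dim_row Q = n" using Q0(2) assms(1)
    by (metis carrier_matD(2) index_mult_mat(3) index_one_mat(3))
  then have Q: "P * Q = 1\<^sub>m n" "Q * P = 1\<^sub>m n" using Q0 assms(1) by auto
  have Qc: "Q \<in> carrier_mat n n"
    using Q assms(1) by (metis carrier_matD(1) carrier_matI index_mult_mat(2,3) index_one_mat(2,3))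
  have "tr A' = tr (A' * P * Q)" using Q assms Qc by simp
  also have "\<dots> = tr (P * A * Q)" by (simp only: assms(5))
  also have "\<dots> = tr (P * (A * Q))" using assms Qc by (metis assoc_mult_mat)
  also have "\<dots> = tr ((A * Q) * P)" using assms Qc by (intro tr_comm) auto
  also have "\<dots> = tr A" using assms Qc Q by (simp add: assoc_mult_mat)
  finally show ?thesis by simp
qed

definition K :: "nat \<Rightarrow> complex" where
  "K d = (\<Sum>i<Suc d. (of_nat d / 2 - of_nat i) * (of_nat d / 2 - of_nat i + 1))"

lemma gauss_nat: "(\<Sum>i<Suc d. i) * 2 = d * (d + 1::nat)"
  by (induction d) auto

lemma sum_lin: "(\<Sum>i<Suc d. (of_nat d - 2 * of_nat i :: complex)) = 0"
proof -
  have "(\<Sum>i<Suc d. (of_nat i :: complex)) * 2 = of_nat d * (of_nat d + 1)"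
    using arg_cong[OF gauss_nat[of d], of "of_nat :: nat \<Rightarrow> complex"]
    by (simp add: algebra_simps del: sum.lessThan_Suc)
  moreover have "(\<Sum>i<Suc d. 2 * (of_nat i :: complex)) = 2 * (\<Sum>i<Suc d. (of_nat i :: complex))"
    by (simp add: sum_distrib_left del: sum.lessThan_Suc)
  ultimately show ?thesis by (simp add: sum_subtractf algebra_simps del: sum.lessThan_Suc)
qed

lemma theta_split: "R_theta d a i = (a^2 + a) + a * (of_nat d - 2 * of_nat i)
   + (of_nat d / 2 - of_nat i) * (of_nat d / 2 - of_nat i + 1)"
  by (simp add: R_theta_def power2_eq_square algebra_simps)

lemma sum_theta: "(\<Sum>i<Suc d. R_theta d a i) = of_nat (d+1) * (a^2+a) + K d"
proof -
  have "(\<Sum>i<Suc d. R_theta d a i) = (\<Sum>i<Suc d. (a^2+a)) + a * (\<Sum>i<Suc d. (of_nat d - 2 * of_nat i :: complex)) + K d"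
    unfolding theta_split K_def by (simp add: sum.distrib sum_distrib_left del: sum.lessThan_Suc)
  then show ?thesis using sum_lin by (simp del: sum.lessThan_Suc)
qed

lemma trA: "tr (R_A d a) = of_nat (d+1) * (a^2+a) + K d"
  unfolding tr_def R_A_def by (simp add: sum_theta del: sum.lessThan_Suc)

lemma trB: "tr (R_B d a b c) = of_nat (d+1) * (b^2+b) + K d"
  unfolding tr_def R_B_def by (simp add: sum_theta del: sum.lessThan_Suc)

lemma trC: "tr (R_C d a b c) = of_nat (d+1) * R_delta d a b c - 2 * K d - of_nat (d+1) * (a^2+a) - of_nat (d+1) * (b^2+b)"
proof -
  have "tr (R_C d a b c) = (\<Sum>i<Suc d. R_delta d a b c - R_theta d a i - R_theta d b i)"
    unfolding tr_def R_C_def R_A_def R_B_def by (auto intro!: sum.cong simp del: sum.lessThan_Suc)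
  then show ?thesis by (simp add: sum_subtractf sum_theta del: sum.lessThan_Suc)
qed

fun sv :: "Rlabel \<Rightarrow> int \<times> int \<times> int" where
  "sv (L1 n) = (2, 2, 2)"
| "sv (L2a n) = (int n + 2, int n + 2, int n - 2)"
| "sv (L2b n) = (int n + 2, int n - 2, int n + 2)"
| "sv (L2c n) = (int n - 2, int n + 2, int n + 2)"
| "sv (L3 n) = (int n + 2, int n + 2, int n + 2)"
| "sv (L4a n) = (int n, int n, int n + 4)"
| "sv (L4b n) = (int n, int n + 4, int n)"
| "sv (L4c n) = (int n + 4, int n, int n)"
| "sv (L5 n) = (int n, int n, int n)"

lemma sv_params:
  "fst (snd (Rlabel_params x)) = (of_int (fst (sv x)) - 4) / 8"
  "fst (snd (snd (Rlabel_params x))) = (of_int (fst (snd (sv x))) - 4) / 8"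
  "snd (snd (snd (Rlabel_params x))) = (of_int (snd (snd (sv x))) - 4) / 8"
  by (cases x; simp add: field_simps)+

lemma sv_nonneg: "Rlabel_valid x \<Longrightarrow> sv x = (sa, sb, sc) \<Longrightarrow> sa \<ge> 0 \<and> sb \<ge> 0 \<and> sc \<ge> 0"
  by (cases x) auto

lemma label_inj: "Rlabel_valid x \<Longrightarrow> Rlabel_valid y \<Longrightarrow> fst (Rlabel_params x) = fst (Rlabel_params y)
   \<Longrightarrow> sv x = sv y \<Longrightarrow> x = y"
  by (cases x; cases y; simp; presburger)

lemma carr: "R_A d a \<in> carrier_mat (d+1) (d+1)" "R_B d a b c \<in> carrier_mat (d+1) (d+1)"
  "R_C d a b c \<in> carrier_mat (d+1) (d+1)"
  unfolding R_C_def R_A_def R_B_def by auto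

lemma iso_inv: assumes "R_iso d a b c d' a' b' c'"
  shows "d = d' \<and> a^2 + a = a'^2 + a' \<and> b^2 + b = b'^2 + b' \<and> c^2 + c = c'^2 + c'"
proof -
  from assms obtain P where d: "d = d'" and P: "P \<in> carrier_mat (d+1) (d+1)" "invertible_mat P"
    "P * R_A d a = R_A d' a' * P" "P * R_B d a b c = R_B d' a' b' c' * P"
    "P * R_C d a b c = R_C d' a' b' c' * P"
    unfolding R_iso_def by auto
  have tA: "tr (R_A d a) = tr (R_A d a')" using tr_sim[OF P(1,2) carr(1) carr(1) P(3)[unfolded d[symmetric]]] .
  have tB: "tr (R_B d a b c) = tr (R_B d a' b' c')" using tr_sim[OF P(1,2) carr(2) carr(2) P(4)[unfolded d[symmetric]]] .
  have tC: "tr (R_C d a b c) = tr (R_C d a' b' c')" using tr_sim[OF P(1,2) carr(3) carr(3) P(5)[unfolded d[symmetric]]] .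
  have nz: "(of_nat (d+1) :: complex) \<noteq> 0" by (simp del: of_nat_Suc)
  have fa: "a^2 + a = a'^2 + a'" using tA nz unfolding trA by simp
  have fb: "b^2 + b = b'^2 + b'" using tB nz unfolding trB by simp
  have "R_delta d a b c = R_delta d a' b' c'" using tC nz fa fb unfolding trC by simp
  moreover have "c^2+c = R_delta d a b c - of_nat d/2*(of_nat d/2+1) - (a^2+a) - (b^2+b)"
    by (simp add: R_delta_def power2_eq_square algebra_simps)
  moreover have "c'^2+c' = R_delta d a' b' c' - of_nat d/2*(of_nat d/2+1) - (a'^2+a') - (b'^2+b')"
    by (simp add: R_delta_def power2_eq_square algebra_simps)
  ultimately have fc: "c^2 + c = c'^2 + c'" using fa fb by simp
  show ?thesis using d fa fb fc by simp
qed

lemma f_int: assumes "((of_int s - 4) / 8 :: complex)^2 + (of_int s - 4) / 8 = ((of_int t - 4) / 8)^2 + (of_int t - 4) / 8"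
  "s \<ge> 0" "t \<ge> 0" shows "s = t"
proof -
  have "(of_int (s^2) :: complex) = of_int (t^2)" using assms(1)
    by (simp add: field_simps power2_eq_square)
  then have "s^2 = t^2" by (simp only: of_int_eq_iff)
  then show ?thesis using assms(2,3) by (simp add: power2_eq_iff_nonneg)
qed

theorem proposition7p7:
  shows "\<forall>x y. Rlabel_valid x \<and> Rlabel_valid y \<and> x \<noteq> y \<longrightarrow> \<not> Rlabel_iso x y"
proof (intro allI impI notI)
  fix x y assume h: "Rlabel_valid x \<and> Rlabel_valid y \<and> x \<noteq> y" and iso: "Rlabel_iso x y"
  obtain d a b c where px: "Rlabel_params x = (d, a, b, c)" by (metis prod_cases4)
  obtain d' a' b' c' where py: "Rlabel_params y = (d', a', b', c')" by (metis prod_cases4)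
  obtain sa sb sc where sx: "sv x = (sa, sb, sc)" by (metis prod_cases3)
  obtain ta tb tc where sy: "sv y = (ta, tb, tc)" by (metis prod_cases3)
  have I: "d = d' \<and> a^2 + a = a'^2 + a' \<and> b^2 + b = b'^2 + b' \<and> c^2 + c = c'^2 + c'"
    using iso px py unfolding Rlabel_iso_def by (intro iso_inv) simp
  note ex = sv_params[of x, unfolded px sx fst_conv snd_conv] and ey = sv_params[of y, unfolded py sy fst_conv snd_conv]
  note nx = sv_nonneg[OF _ sx] and ny = sv_nonneg[OF _ sy]
  have "sa = ta" using I ex ey nx ny h by (intro f_int) auto
  moreover have "sb = tb" using I ex ey nx ny h by (intro f_int) auto
  moreover have "sc = tc" using I ex ey nx ny h by (intro f_int) auto
  ultimately have "x = y" using label_inj[of x y] h I px py sx sy by simp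
  then show False using h by simp
qed
end
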